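(* Let $\bar F^a,\bar F^b,\bar F^c:\mathbb{R}^n\times\mathbb{R}^q\times\mathbb{R}_{>0}\to\mathbb{R}^n$ be closed-loop discrete-time models. If the pairs $(\bar F^a,\bar F^b)$ and $(\bar F^b,\bar F^c)$ are REPC, then the pair $(\bar F^a,\bar F^c)$ is REPC.
   Context: $\mathcal{K}_\infty$: continuous, strictly increasing, unbounded functions $\mathbb{R}_{\ge0}\to\mathbb{R}_{\ge0}$ vanishing at $0$. REPC: $\bar F^a$ is Robustly Equilibrium-Preserving Consistent with $\bar F^b$ (the pair $(\bar F^a,\bar F^b)$ is REPC) if there exists $\phi\in\mathcal{K}_\infty$ such that for each $M,E\ge0$ there exist constants $K=K(M,E)>0$, $T^*=T^*(M,E)>0$ and a function $\rho\in\mathcal{K}_\infty$ such that $|\bar F^a(x^a,e,T)-\bar F^b(x^b,e,T)|\le(1+KT)|x^a-x^b|+T\rho(T)(\max\{|x^a|,|x^b|\}+\phi(|e|))$ for all $|x^a|,|x^b|\le M$, $|e|\le E$ and $T\in(0,T^* )$. *)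

theory Defs
  imports "HOL-Analysis.Analysis"
begin

text \<open>Class K-infinity: continuous, strictly increasing, unbounded functions
  from the nonnegative reals to the nonnegative reals vanishing at 0.
  Only the restriction to [0,oo) is relevant.\<close>
definition Kinf :: "(real \<Rightarrow> real) set" where
  "Kinf = {\<phi>. continuous_on {0..} \<phi> \<and> strict_mono_on {0..} \<phi> \<and>
              (\<forall>s\<ge>0. \<phi> s \<ge> 0) \<and> \<phi> 0 = 0 \<and> filterlim \<phi> at_top at_top}"

text \<open>Robust Equilibrium-Preserving Consistency of Fa with Fb.
  Models are maps R^n x R^q x R_{>0} -> R^n; only T > 0 is ever used.\<close>
definition REPC ::
  "(real^'n \<Rightarrow> real^'q \<Rightarrow> real \<Rightarrow> real^'n) \<Rightarrow>
   (real^'n \<Rightarrow> real^'q \<Rightarrow> real \<Rightarrow> real^'n) \<Rightarrow> bool" where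
  "REPC Fa Fb \<longleftrightarrow>
    (\<exists>\<phi>\<in>Kinf. \<forall>M\<ge>0. \<forall>E\<ge>0. \<exists>K>0. \<exists>Tstar>0. \<exists>\<rho>\<in>Kinf.
       \<forall>xa xb e T. norm xa \<le> M \<and> norm xb \<le> M \<and> norm e \<le> E \<and> 0 < T \<and> T < Tstar \<longrightarrow>
         norm (Fa xa e T - Fb xb e T)
           \<le> (1 + K * T) * norm (xa - xb)
             + T * \<rho> T * (max (norm xa) (norm xb) + \<phi> (norm e)))"

end

theory Submission
  imports Defs
begin

lemma Kinf_add:
  assumes "f \<in> Kinf" "g \<in> Kinf"
  shows "(\<lambda>s. f s + g s) \<in> Kinf"
proof -
  have c: "continuous_on {0..} (\<lambda>s. f s + g s)"
    using assms unfolding Kinf_def by (auto intro: continuous_on_add)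
  have m: "strict_mono_on {0..} (\<lambda>s. f s + g s)"
    using assms unfolding Kinf_def strict_mono_on_def by (auto intro: add_strict_mono)
  have l: "filterlim (\<lambda>s. f s + g s) at_top at_top"
    using assms unfolding Kinf_def by (auto intro: filterlim_at_top_add_at_top)
  show ?thesis using assms c m l unfolding Kinf_def by auto
qed

lemma Kinf_nonneg: "f \<in> Kinf \<Longrightarrow> s \<ge> 0 \<Longrightarrow> f s \<ge> 0"
  unfolding Kinf_def by auto

theorem proposition1:
  fixes Fa Fb Fc :: "real^'n \<Rightarrow> real^'q \<Rightarrow> real \<Rightarrow> real^'n"
  assumes "REPC Fa Fb" and "REPC Fb Fc"
  shows "REPC Fa Fc"
proof -
  obtain \<phi>1 where p1: "\<phi>1 \<in> Kinf" and H1: "\<forall>M\<ge>0. \<forall>E\<ge>0. \<exists>K>0. \<exists>Tstar>0. \<exists>\<rho>\<in>Kinf.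
       \<forall>xa xb e T. norm xa \<le> M \<and> norm xb \<le> M \<and> norm e \<le> E \<and> 0 < T \<and> T < Tstar \<longrightarrow>
         norm (Fa xa e T - Fb xb e T)
           \<le> (1 + K * T) * norm (xa - xb)
             + T * \<rho> T * (max (norm xa) (norm xb) + \<phi>1 (norm e))"
    using assms(1) unfolding REPC_def by blast
  obtain \<phi>2 where p2: "\<phi>2 \<in> Kinf" and H2: "\<forall>M\<ge>0. \<forall>E\<ge>0. \<exists>K>0. \<exists>Tstar>0. \<exists>\<rho>\<in>Kinf.
       \<forall>xa xb e T. norm xa \<le> M \<and> norm xb \<le> M \<and> norm e \<le> E \<and> 0 < T \<and> T < Tstar \<longrightarrow>
         norm (Fb xa e T - Fc xb e T)
           \<le> (1 + K * T) * norm (xa - xb)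
             + T * \<rho> T * (max (norm xa) (norm xb) + \<phi>2 (norm e))"
    using assms(2) unfolding REPC_def by blast
  have main: "\<exists>K>0. \<exists>Tstar>0. \<exists>\<rho>\<in>Kinf.
       \<forall>xa xb e T. norm xa \<le> M \<and> norm xb \<le> M \<and> norm e \<le> E \<and> 0 < T \<and> T < Tstar \<longrightarrow>
         norm (Fa xa e T - Fc xb e T)
           \<le> (1 + K * T) * norm (xa - xb)
             + T * \<rho> T * (max (norm xa) (norm xb) + (\<phi>1 (norm e) + \<phi>2 (norm e)))"
    if M: "M \<ge> 0" and E: "E \<ge> 0" for M E
  proof -
    obtain K1 T1 \<rho>1 where K1: "K1 > 0" and T1: "T1 > 0" and r1: "\<rho>1 \<in> Kinf" and
      h1: "\<And>xa xb e T. norm xa \<le> M \<Longrightarrow> norm xb \<le> M \<Longrightarrow> norm e \<le> E \<Longrightarrow> 0 < T \<Longrightarrow> T < T1 \<Longrightarrow>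
         norm (Fa xa e T - Fb xb e T)
           \<le> (1 + K1 * T) * norm (xa - xb)
             + T * \<rho>1 T * (max (norm xa) (norm xb) + \<phi>1 (norm e))"
      using H1 M E by metis
    obtain K2 T2 \<rho>2 where T2: "T2 > 0" and r2: "\<rho>2 \<in> Kinf" and
      h2: "\<And>xa xb e T. norm xa \<le> M \<Longrightarrow> norm xb \<le> M \<Longrightarrow> norm e \<le> E \<Longrightarrow> 0 < T \<Longrightarrow> T < T2 \<Longrightarrow>
         norm (Fb xa e T - Fc xb e T)
           \<le> (1 + K2 * T) * norm (xa - xb)
             + T * \<rho>2 T * (max (norm xa) (norm xb) + \<phi>2 (norm e))"
      using H2 M E by metis
    have Tm: "min T1 T2 > 0" using T1 T2 by simp
    have rK: "(\<lambda>s. \<rho>1 s + \<rho>2 s) \<in> Kinf" using r1 r2 by (rule Kinf_add)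
    have ALL: "\<forall>xa xb e T. norm xa \<le> M \<and> norm xb \<le> M \<and> norm e \<le> E \<and> 0 < T \<and> T < min T1 T2 \<longrightarrow>
         norm (Fa xa e T - Fc xb e T)
           \<le> (1 + K1 * T) * norm (xa - xb)
             + T * (\<lambda>s. \<rho>1 s + \<rho>2 s) T * (max (norm xa) (norm xb) + (\<phi>1 (norm e) + \<phi>2 (norm e)))"
    proof (intro allI impI)
      fix xa xb :: "real^'n" and e :: "real^'q" and T :: real
      assume a: "norm xa \<le> M \<and> norm xb \<le> M \<and> norm e \<le> E \<and> 0 < T \<and> T < min T1 T2"
      have e1: "norm (Fa xa e T - Fb xb e T) \<le> (1 + K1 * T) * norm (xa - xb)
             + T * \<rho>1 T * (max (norm xa) (norm xb) + \<phi>1 (norm e))"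
        using a by (intro h1) auto
      have e2: "norm (Fb xb e T - Fc xb e T) \<le> (1 + K2 * T) * norm (xb - xb)
             + T * \<rho>2 T * (max (norm xb) (norm xb) + \<phi>2 (norm e))"
        using a by (intro h2) auto
      have tri: "norm (Fa xa e T - Fc xb e T) \<le> norm (Fa xa e T - Fb xb e T) + norm (Fb xb e T - Fc xb e T)"
        using norm_triangle_ineq[of "Fa xa e T - Fb xb e T" "Fb xb e T - Fc xb e T"] by simp
      have g1: "\<rho>1 T \<ge> 0" "\<rho>2 T \<ge> 0" using a r1 r2 Kinf_nonneg by auto
      have g2: "\<phi>1 (norm e) \<ge> 0" "\<phi>2 (norm e) \<ge> 0" using p1 p2 Kinf_nonneg by auto
      define m where "m = max (norm xa) (norm xb)"
      have m0: "m \<ge> 0" "norm xb \<le> m" unfolding m_def by (auto simp: le_max_iff_disj)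
      have k1: "\<rho>1 T * (m + \<phi>1 (norm e)) \<le> \<rho>1 T * (m + (\<phi>1 (norm e) + \<phi>2 (norm e)))"
        using g1 g2 by (intro mult_left_mono) auto
      have k2: "\<rho>2 T * (norm xb + \<phi>2 (norm e)) \<le> \<rho>2 T * (m + (\<phi>1 (norm e) + \<phi>2 (norm e)))"
        using g1 g2 m0 by (intro mult_left_mono) auto
      have "T * \<rho>1 T * (m + \<phi>1 (norm e)) + T * \<rho>2 T * (norm xb + \<phi>2 (norm e))
          \<le> T * (\<rho>1 T + \<rho>2 T) * (m + (\<phi>1 (norm e) + \<phi>2 (norm e)))"
      proof -
        have "T * (\<rho>1 T * (m + \<phi>1 (norm e)) + \<rho>2 T * (norm xb + \<phi>2 (norm e)))
          \<le> T * (\<rho>1 T * (m + (\<phi>1 (norm e) + \<phi>2 (norm e))) + \<rho>2 T * (m + (\<phi>1 (norm e) + \<phi>2 (norm e))))"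
          using a k1 k2 by (intro mult_left_mono) auto
        then show ?thesis by (simp add: algebra_simps)
      qed
      then show "norm (Fa xa e T - Fc xb e T) \<le> (1 + K1 * T) * norm (xa - xb)
             + T * (\<lambda>s. \<rho>1 s + \<rho>2 s) T * (max (norm xa) (norm xb) + (\<phi>1 (norm e) + \<phi>2 (norm e)))"
        using tri e1 e2 unfolding m_def by simp
    qed
    show ?thesis
      apply (rule exI[of _ K1])
      apply (rule conjI[OF K1])
      apply (rule exI[of _ "min T1 T2"])
      apply (rule conjI[OF Tm])
      apply (rule bexI[OF _ rK])
      apply (rule ALL)
      done
  qed
  show ?thesis unfolding REPC_def
    apply (rule bexI[OF _ Kinf_add[OF p1 p2]])
    apply (intro allI impI)
    apply (rule main)
     apply assumption+
    done
qed

end
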